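(* Let $k,n\in\mathbb{N}$, let $p_0,\dots,p_k$ be positive reals summing to $1$, and let $\boldsymbol{X}=[X_0,\dots,X_k]^\top$ have the multinomial distribution $\Pr\{\boldsymbol{X}=\boldsymbol{x}\}=\frac{n!}{\prod_{i=0}^kx_i!}\prod_{i=0}^kp_i^{x_i}$ for nonnegative integers $x_i$ with $\sum_ix_i=n$. Let $\mu_i=np_i$, $\boldsymbol{\mu}=[\mu_0,\dots,\mu_k]^\top$, and let $z_0,\dots,z_k$ be nonnegative integers with $\sum_{i=0}^kz_i=n$, $\boldsymbol{z}=[z_0,\dots,z_k]^\top$. Then $$\Pr\{\boldsymbol{X}\boldsymbol{\prec}\boldsymbol{z}\}\le\prod_{i=0}^k\Big(\frac{\mu_i}{z_i}\Big)^{z_i}\ \text{ if }\boldsymbol{z}\boldsymbol{\prec}\boldsymbol{\mu},\qquad \Pr\{\boldsymbol{X}\boldsymbol{\succ}\boldsymbol{z}\}\le\prod_{i=0}^k\Big(\frac{\mu_i}{z_i}\Big)^{z_i}\ \text{ if }\boldsymbol{z}\boldsymbol{\succ}\boldsymbol{\mu}.$$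
   Context: For vectors $\boldsymbol{x}=[x_0,\dots,x_k]^\top,\boldsymbol{y}=[y_0,\dots,y_k]^\top$, $\boldsymbol{x}\boldsymbol{\prec}\boldsymbol{y}$ means $x_i\le y_i$ for $i=1,\dots,k$ (index $0$ is not compared), and $\boldsymbol{x}\boldsymbol{\succ}\boldsymbol{y}$ means $x_i\ge y_i$ for $i=1,\dots,k$. The convention $0^0=1$ is used. *)

theory Defs
  imports Complex_Main
begin

text \<open>Vectors [x_0,...,x_k] are represented as functions on nat, only indices 0..k matter.
  Outcomes of the multinomial experiment: nonnegative integer vectors summing to n
  (normalised to be 0 outside 0..k so that the outcome set is finite).\<close>

definition multinomial_support :: "nat \<Rightarrow> nat \<Rightarrow> (nat \<Rightarrow> nat) set" where
  "multinomial_support k n = {x. (\<forall>i>k. x i = 0) \<and> (\<Sum>i=0..k. x i) = n}"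

definition multinomial_pmf :: "nat \<Rightarrow> nat \<Rightarrow> (nat \<Rightarrow> real) \<Rightarrow> (nat \<Rightarrow> nat) \<Rightarrow> real" where
  "multinomial_pmf k n p x =
     fact n / (\<Prod>i=0..k. fact (x i)) * (\<Prod>i=0..k. p i ^ x i)"

definition multinomial_prob :: "nat \<Rightarrow> nat \<Rightarrow> (nat \<Rightarrow> real) \<Rightarrow> ((nat \<Rightarrow> nat) \<Rightarrow> bool) \<Rightarrow> real" where
  "multinomial_prob k n p E = (\<Sum>x\<in>{x\<in>multinomial_support k n. E x}. multinomial_pmf k n p x)"

definition vprec :: "nat \<Rightarrow> (nat \<Rightarrow> 'a::ord) \<Rightarrow> (nat \<Rightarrow> 'a) \<Rightarrow> bool" where
  "vprec k x y \<longleftrightarrow> (\<forall>i\<in>{1..k}. x i \<le> y i)"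

definition vsucc :: "nat \<Rightarrow> (nat \<Rightarrow> 'a::ord) \<Rightarrow> (nat \<Rightarrow> 'a) \<Rightarrow> bool" where
  "vsucc k x y \<longleftrightarrow> (\<forall>i\<in>{1..k}. x i \<ge> y i)"

end

theory Submission
  imports Defs
begin

lemma supp_0: "multinomial_support 0 n = {(\<lambda>i. if i = 0 then n else 0)}"
  unfolding multinomial_support_def by (auto simp: fun_eq_iff)

lemma supp_Suc: "multinomial_support (Suc k) n =
   (\<lambda>(j,y). y(Suc k := j)) ` (SIGMA j:{0..n}. multinomial_support k (n-j))"
proof (rule set_eqI, rule iffI)
  fix x assume x: "x \<in> multinomial_support (Suc k) n"
  let ?y = "x(Suc k := 0)" and ?j = "x (Suc k)"
  have s: "(\<Sum>i=0..k. x i) + x (Suc k) = n" using x by (simp add: multinomial_support_def)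
  have "(\<Sum>i=0..k. ?y i) = (\<Sum>i=0..k. x i)" by (intro sum.cong) auto
  then have "?y \<in> multinomial_support k (n - ?j)" using x s
    by (auto simp: multinomial_support_def)
  moreover have "?j \<in> {0..n}" using s by auto
  ultimately show "x \<in> (\<lambda>(j,y). y(Suc k := j)) ` (SIGMA j:{0..n}. multinomial_support k (n-j))"
    by (intro image_eqI[of _ _ "(?j, ?y)"]) auto
next
  fix x assume "x \<in> (\<lambda>(j,y). y(Suc k := j)) ` (SIGMA j:{0..n}. multinomial_support k (n-j))"
  then obtain j y where j: "j \<le> n" and y: "y \<in> multinomial_support k (n-j)" and xe: "x = y(Suc k := j)"
    by auto
  have "(\<Sum>i=0..k. x i) = (\<Sum>i=0..k. y i)" unfolding xe by (intro sum.cong) auto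
  then show "x \<in> multinomial_support (Suc k) n" using y j unfolding xe
    by (auto simp: multinomial_support_def)
qed

lemma supp_inj: "inj_on (\<lambda>(j,y). y(Suc k := j)) (SIGMA j:{0..n}. multinomial_support k (n-j))"
proof (rule inj_onI, clarsimp)
  fix j y j' y'
  assume "y \<in> multinomial_support k (n-j)" "y' \<in> multinomial_support k (n-j')"
    and e: "y(Suc k := j) = y'(Suc k := j')"
  then have "y (Suc k) = 0" "y' (Suc k) = 0" by (auto simp: multinomial_support_def)
  moreover have "j = j'" using fun_cong[OF e, of "Suc k"] by simp
  moreover have "y = (y(Suc k := j))(Suc k := 0)" "y' = (y'(Suc k := j'))(Suc k := 0)"
    using \<open>y (Suc k) = 0\<close> \<open>y' (Suc k) = 0\<close> by (auto simp: fun_eq_iff)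
  ultimately show "j = j' \<and> y = y'" using e by metis
qed

lemma supp_finite: "finite (multinomial_support k n)"
proof (induction k arbitrary: n)
  case 0 then show ?case by (simp add: supp_0)
next
  case (Suc k) then show ?case by (simp add: supp_Suc)
qed

lemma aux: "(A::real) \<noteq> 0 \<Longrightarrow> F \<noteq> 0 \<Longrightarrow> (N*F*G)/(A*F) * (B*c) = N*c*(G/A*B)"
  by (simp add: field_simps)

lemma multinomial_thm:
  fixes q :: "nat \<Rightarrow> real"
  shows "(\<Sum>x\<in>multinomial_support k n. fact n / (\<Prod>i=0..k. fact (x i)) * (\<Prod>i=0..k. q i ^ x i))
        = (\<Sum>i=0..k. q i) ^ n"
proof (induction k arbitrary: n)
  case 0 then show ?case by (simp add: supp_0)
next
  case (Suc k)
  let ?f = "\<lambda>x. fact n / (\<Prod>i=0..Suc k. fact (x i)) * (\<Prod>i=0..Suc k. q i ^ x i) :: real"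
  have "(\<Sum>x\<in>multinomial_support (Suc k) n. ?f x)
      = (\<Sum>(j,y)\<in>(SIGMA j:{0..n}. multinomial_support k (n-j)). ?f (y(Suc k := j)))"
    unfolding supp_Suc by (subst sum.reindex[OF supp_inj]) (simp add: case_prod_unfold)
  also have "\<dots> = (\<Sum>j\<in>{0..n}. \<Sum>y\<in>multinomial_support k (n-j). ?f (y(Suc k := j)))"
    by (rule sum.Sigma[symmetric]) (auto simp: supp_finite)
  also have "\<dots> = (\<Sum>j\<in>{0..n}. of_nat (n choose j) * q (Suc k) ^ j *
        (\<Sum>y\<in>multinomial_support k (n-j). fact (n-j) / (\<Prod>i=0..k. fact (y i)) * (\<Prod>i=0..k. q i ^ y i)))"
  proof (rule sum.cong[OF refl])
    fix j assume j: "j \<in> {0..n}"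
    show "(\<Sum>y\<in>multinomial_support k (n-j). ?f (y(Suc k := j))) = of_nat (n choose j) * q (Suc k) ^ j *
        (\<Sum>y\<in>multinomial_support k (n-j). fact (n-j) / (\<Prod>i=0..k. fact (y i)) * (\<Prod>i=0..k. q i ^ y i))"
      unfolding sum_distrib_left
    proof (rule sum.cong[OF refl])
      fix y
      have p1: "(\<Prod>i=0..k. fact ((y(Suc k := j)) i)) = (\<Prod>i=0..k. fact (y i) :: real)"
        by (intro prod.cong) auto
      have p2: "(\<Prod>i=0..k. q i ^ (y(Suc k := j)) i) = (\<Prod>i=0..k. q i ^ y i)"
        by (intro prod.cong) auto
      have fn: "fact n = (of_nat (n choose j) * fact j * fact (n-j) :: real)"
      proof -
        have nat: "fact j * fact (n-j) * (n choose j) = (fact n :: nat)"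
          using j by (simp add: binomial_fact_lemma)
        then have "(of_nat (fact j * fact (n-j) * (n choose j)) :: real) = of_nat (fact n)"
          by (simp only:)
        then show ?thesis by (simp add: mult_ac)
      qed
      have pos: "(\<Prod>i=0..k. fact (y i) :: real) \<noteq> 0" by simp
      have e1: "(\<Prod>i=0..Suc k. fact ((y(Suc k := j)) i)) = (\<Prod>i=0..k. fact (y i)) * (fact j :: real)"
        using p1 by (simp add: prod.atLeast0_atMost_Suc)
      have e2: "(\<Prod>i=0..Suc k. q i ^ (y(Suc k := j)) i) = (\<Prod>i=0..k. q i ^ y i) * q (Suc k) ^ j"
        using p2 by (simp add: prod.atLeast0_atMost_Suc)
      show "?f (y(Suc k := j)) = of_nat (n choose j) * q (Suc k) ^ j *
           (fact (n-j) / (\<Prod>i=0..k. fact (y i)) * (\<Prod>i=0..k. q i ^ y i))"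
        unfolding e1 e2 fn by (rule aux) (use pos in auto)
    qed
  qed
  also have "\<dots> = (\<Sum>j\<le>n. of_nat (n choose j) * q (Suc k) ^ j * (\<Sum>i=0..k. q i) ^ (n-j))"
    using Suc.IH by (simp add: atLeast0AtMost)
  also have "\<dots> = (q (Suc k) + (\<Sum>i=0..k. q i)) ^ n" by (rule binomial_ring[symmetric])
  finally show ?case by (simp add: add.commute)
qed


lemma pmf_nonneg:
  assumes "\<forall>i\<in>{0..k}. p i \<ge> 0"
  shows "multinomial_pmf k n p x \<ge> 0"
  using assms unfolding multinomial_pmf_def
  by (intro mult_nonneg_nonneg divide_nonneg_nonneg prod_nonneg) auto

lemma chernoff:
  fixes p s :: "nat \<Rightarrow> real"
  assumes p0: "\<forall>i\<in>{0..k}. p i \<ge> 0" and s0: "\<forall>i\<in>{0..k}. s i \<ge> 0"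
    and C: "(\<Prod>i=0..k. s i ^ z i) > 0"
    and H: "\<And>x. x \<in> multinomial_support k n \<Longrightarrow> E x \<Longrightarrow>
              (\<Prod>i=0..k. s i ^ z i) \<le> (\<Prod>i=0..k. s i ^ x i)"
  shows "multinomial_prob k n p E \<le> (\<Sum>i=0..k. p i * s i) ^ n / (\<Prod>i=0..k. s i ^ z i)"
proof -
  define C where "C = (\<Prod>i=0..k. s i ^ z i)"
  have Cp: "C > 0" using C by (simp add: C_def)
  let ?g = "\<lambda>x. multinomial_pmf k n p x * (\<Prod>i=0..k. s i ^ x i) / C"
  have g0: "?g x \<ge> 0" for x
    using pmf_nonneg[OF p0] s0 Cp by (intro divide_nonneg_pos mult_nonneg_nonneg prod_nonneg) auto
  have "multinomial_prob k n p E = (\<Sum>x\<in>{x\<in>multinomial_support k n. E x}. multinomial_pmf k n p x)"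
    by (simp add: multinomial_prob_def)
  also have "\<dots> \<le> (\<Sum>x\<in>{x\<in>multinomial_support k n. E x}. ?g x)"
  proof (rule sum_mono)
    fix x assume x: "x \<in> {x\<in>multinomial_support k n. E x}"
    have "1 \<le> (\<Prod>i=0..k. s i ^ x i) / C" using H[of x] x Cp by (simp add: C_def)
    then have "multinomial_pmf k n p x * 1 \<le> multinomial_pmf k n p x * ((\<Prod>i=0..k. s i ^ x i) / C)"
      using pmf_nonneg[OF p0] by (intro mult_left_mono) auto
    then show "multinomial_pmf k n p x \<le> ?g x" by simp
  qed
  also have "\<dots> \<le> (\<Sum>x\<in>multinomial_support k n. ?g x)"
    by (rule sum_mono2) (auto simp: supp_finite g0)
  also have "\<dots> = (\<Sum>x\<in>multinomial_support k n. fact n / (\<Prod>i=0..k. fact (x i)) * (\<Prod>i=0..k. (p i * s i) ^ x i)) / C"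
    unfolding sum_divide_distrib multinomial_pmf_def
    by (intro sum.cong) (auto simp: power_mult_distrib prod.distrib)
  also have "\<dots> = (\<Sum>i=0..k. p i * s i) ^ n / C" by (subst multinomial_thm) (rule refl)
  finally show ?thesis by (simp add: C_def)
qed

lemma cond_prec:
  fixes s :: "nat \<Rightarrow> real" and x z :: "nat \<Rightarrow> nat"
  assumes s: "\<forall>i\<in>{1..k}. 0 \<le> s i \<and> s i \<le> s 0" and s00: "s 0 \<ge> 0"
    and xz: "\<forall>i\<in>{1..k}. x i \<le> z i"
    and sums: "(\<Sum>i=0..k. x i) = (\<Sum>i=0..k. z i)"
  shows "(\<Prod>i=0..k. s i ^ z i) \<le> (\<Prod>i=0..k. s i ^ x i)"
proof -
  have sp: "(\<Sum>i=0..k. f i) = f 0 + (\<Sum>i=1..k. f i)" for f :: "nat \<Rightarrow> nat"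
    by (simp add: sum.atLeast_Suc_atMost)
  have pp: "(\<Prod>i=0..k. f i) = f 0 * (\<Prod>i=1..k. f i)" for f :: "nat \<Rightarrow> real"
    by (simp add: prod.atLeast_Suc_atMost)
  have "(\<Sum>i=1..k. z i) = (\<Sum>i=1..k. x i) + (\<Sum>i=1..k. z i - x i)"
    unfolding sum.distrib[symmetric] using xz by (intro sum.cong) auto
  then have x0: "x 0 = z 0 + (\<Sum>i=1..k. z i - x i)" using sums sp[of x] sp[of z] by linarith
  have a: "(\<Prod>i=1..k. s i ^ z i) \<le> (\<Prod>i=1..k. s i ^ x i * s 0 ^ (z i - x i))"
  proof (rule prod_mono)
    fix i assume i: "i \<in> {1..k}"
    have "s i ^ z i = s i ^ x i * s i ^ (z i - x i)" using xz i by (simp add: power_add[symmetric])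
    also have "\<dots> \<le> s i ^ x i * s 0 ^ (z i - x i)"
      using s i by (intro mult_left_mono power_mono) auto
    finally show "0 \<le> s i ^ z i \<and> s i ^ z i \<le> s i ^ x i * s 0 ^ (z i - x i)" using s i by simp
  qed
  have "(\<Prod>i=0..k. s i ^ z i) = s 0 ^ z 0 * (\<Prod>i=1..k. s i ^ z i)" by (rule pp)
  also have "\<dots> \<le> s 0 ^ z 0 * (\<Prod>i=1..k. s i ^ x i * s 0 ^ (z i - x i))"
    using a s00 by (intro mult_left_mono) auto
  also have "\<dots> = s 0 ^ x 0 * (\<Prod>i=1..k. s i ^ x i)"
    unfolding x0 power_add power_sum prod.distrib by (simp add: mult_ac)
  also have "\<dots> = (\<Prod>i=0..k. s i ^ x i)" by (rule pp[symmetric])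
  finally show ?thesis .
qed

lemma cond_succ:
  fixes s :: "nat \<Rightarrow> real" and x z :: "nat \<Rightarrow> nat"
  assumes s: "\<forall>i\<in>{1..k}. s 0 \<le> s i" and s00: "s 0 \<ge> 0"
    and xz: "\<forall>i\<in>{1..k}. z i \<le> x i"
    and sums: "(\<Sum>i=0..k. x i) = (\<Sum>i=0..k. z i)"
  shows "(\<Prod>i=0..k. s i ^ z i) \<le> (\<Prod>i=0..k. s i ^ x i)"
proof -
  have sp: "(\<Sum>i=0..k. f i) = f 0 + (\<Sum>i=1..k. f i)" for f :: "nat \<Rightarrow> nat"
    by (simp add: sum.atLeast_Suc_atMost)
  have pp: "(\<Prod>i=0..k. f i) = f 0 * (\<Prod>i=1..k. f i)" for f :: "nat \<Rightarrow> real"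
    by (simp add: prod.atLeast_Suc_atMost)
  have "(\<Sum>i=1..k. x i) = (\<Sum>i=1..k. z i) + (\<Sum>i=1..k. x i - z i)"
    unfolding sum.distrib[symmetric] using xz by (intro sum.cong) auto
  then have z0: "z 0 = x 0 + (\<Sum>i=1..k. x i - z i)" using sums sp[of x] sp[of z] by linarith
  have a: "(\<Prod>i=1..k. s i ^ z i * s 0 ^ (x i - z i)) \<le> (\<Prod>i=1..k. s i ^ x i)"
  proof (rule prod_mono)
    fix i assume i: "i \<in> {1..k}"
    have si0: "0 \<le> s i" using s s00 i by force
    have "s i ^ z i * s 0 ^ (x i - z i) \<le> s i ^ z i * s i ^ (x i - z i)"
      using s s00 i si0 by (intro mult_left_mono power_mono) auto
    also have "\<dots> = s i ^ x i" using xz i by (simp add: power_add[symmetric])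
    finally show "0 \<le> s i ^ z i * s 0 ^ (x i - z i) \<and> s i ^ z i * s 0 ^ (x i - z i) \<le> s i ^ x i"
      using s00 s i by (meson order_trans zero_le_mult_iff zero_le_power)
  qed
  have "(\<Prod>i=0..k. s i ^ z i) = s 0 ^ x 0 * (\<Prod>i=1..k. s i ^ z i * s 0 ^ (x i - z i))"
    unfolding pp[of "\<lambda>i. s i ^ z i"] z0 power_add power_sum prod.distrib by (simp add: mult_ac)
  also have "\<dots> \<le> s 0 ^ x 0 * (\<Prod>i=1..k. s i ^ x i)"
    using a s00 by (intro mult_left_mono) auto
  also have "\<dots> = (\<Prod>i=0..k. s i ^ x i)" by (rule pp[symmetric])
  finally show ?thesis .
qed

theorem corollary1:
  fixes k n :: nat and p :: "nat \<Rightarrow> real" and z :: "nat \<Rightarrow> nat"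
  assumes p_pos: "\<forall>i\<in>{0..k}. p i > 0"
    and p_sum: "(\<Sum>i=0..k. p i) = 1"
    and z_sum: "(\<Sum>i=0..k. z i) = n"
  defines "\<mu> \<equiv> (\<lambda>i. real n * p i)"
  shows "(vprec k (\<lambda>i. real (z i)) \<mu> \<longrightarrow>
            multinomial_prob k n p (\<lambda>x. vprec k x z)
              \<le> (\<Prod>i=0..k. (\<mu> i / real (z i)) ^ z i))
       \<and> (vsucc k (\<lambda>i. real (z i)) \<mu> \<longrightarrow>
            multinomial_prob k n p (\<lambda>x. vsucc k x z)
              \<le> (\<Prod>i=0..k. (\<mu> i / real (z i)) ^ z i))"
proof -
  have sp: "(\<Sum>i=0..k. f i) = f 0 + (\<Sum>i=1..k. f i)" for f :: "nat \<Rightarrow> real"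
    by (simp add: sum.atLeast_Suc_atMost)
  have p0: "\<forall>i\<in>{0..k}. p i \<ge> 0" using p_pos by auto
  have supp: "(\<Sum>i=0..k. x i) = (\<Sum>i=0..k. z i)" if "x \<in> multinomial_support k n" for x
    using that z_sum by (simp add: multinomial_support_def)
  show ?thesis
  proof (cases "n = 0")
    case True
    then have z0: "\<forall>i\<in>{0..k}. z i = 0" using z_sum by simp
    have R: "(\<Prod>i=0..k. (\<mu> i / real (z i)) ^ z i) = 1" using z0 by simp
    have "multinomial_prob k n p E \<le> 1" for E
      using chernoff[of k p "\<lambda>_. 1" z n E] p0 True by simp
    then show ?thesis using R by simp
  next
    case False
    then have npos: "real n > 0" by simp
    define s where "s i = real (z i) / \<mu> i" for i
    have mupos: "\<mu> i > 0" if "i \<in> {0..k}" for i using p_pos that npos by (simp add: \<mu>_def)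
    have s0: "\<forall>i\<in>{0..k}. s i \<ge> 0" using mupos by (auto simp: s_def less_imp_le)
    have Cpos: "(\<Prod>i=0..k. s i ^ z i) > 0"
    proof (rule prod_pos)
      fix i assume i: "i \<in> {0..k}"
      show "s i ^ z i > 0"
      proof (cases "z i = 0")
        case False then show ?thesis using mupos[OF i] by (simp add: s_def)
      qed simp
    qed
    have ps: "(\<Sum>i=0..k. p i * s i) = 1"
    proof -
      have "(\<Sum>i=0..k. p i * s i) = (\<Sum>i=0..k. real (z i) / real n)"
        using p_pos npos by (intro sum.cong) (force simp: s_def \<mu>_def)+
      also have "\<dots> = real (\<Sum>i=0..k. z i) / real n" by (simp add: sum_divide_distrib)
      finally show ?thesis using z_sum npos by simp
    qed
    have R: "(\<Prod>i=0..k. (\<mu> i / real (z i)) ^ z i) = 1 / (\<Prod>i=0..k. s i ^ z i)"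
    proof -
      have "(\<Prod>i=0..k. (\<mu> i / real (z i)) ^ z i) = (\<Prod>i=0..k. inverse (s i ^ z i))"
        by (intro prod.cong) (simp_all add: s_def flip: power_inverse)
      also have "\<dots> = inverse (\<Prod>i=0..k. s i ^ z i)" by (rule prod_inversef[of "\<lambda>i. s i ^ z i", unfolded o_def])
      finally show ?thesis by (simp add: divide_inverse)
    qed
    have musum: "\<mu> 0 + (\<Sum>i=1..k. \<mu> i) = real n"
    proof -
      have "(\<Sum>i=0..k. \<mu> i) = real n" using p_sum by (simp add: \<mu>_def sum_distrib_left[symmetric])
      then show ?thesis using sp[of \<mu>] by simp
    qed
    have zsum: "real (z 0) + (\<Sum>i=1..k. real (z i)) = real n"
    proof -
      have "(\<Sum>i=0..k. real (z i)) = real n" using z_sum by (simp flip: of_nat_sum)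
      then show ?thesis using sp[of "\<lambda>i. real (z i)"] by simp
    qed
    have m0: "\<mu> 0 > 0" using mupos by simp
    have A: "multinomial_prob k n p (\<lambda>x. vprec k x z) \<le> (\<Prod>i=0..k. (\<mu> i / real (z i)) ^ z i)"
      if V: "vprec k (\<lambda>i. real (z i)) \<mu>"
    proof -
      have le: "\<forall>i\<in>{1..k}. real (z i) \<le> \<mu> i" using V by (simp add: vprec_def)
      have "(\<Sum>i=1..k. real (z i)) \<le> (\<Sum>i=1..k. \<mu> i)" using le by (intro sum_mono) auto
      then have "\<mu> 0 \<le> real (z 0)" using musum zsum by linarith
      then have s01: "s 0 \<ge> 1" using m0 by (simp add: s_def)
      have si: "\<forall>i\<in>{1..k}. 0 \<le> s i \<and> s i \<le> s 0"
      proof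
        fix i assume i: "i \<in> {1..k}"
        have "s i \<le> 1" using le i mupos[of i] by (simp add: s_def)
        then show "0 \<le> s i \<and> s i \<le> s 0" using s0 i s01 by auto
      qed
      have "multinomial_prob k n p (\<lambda>x. vprec k x z) \<le> (\<Sum>i=0..k. p i * s i) ^ n / (\<Prod>i=0..k. s i ^ z i)"
        by (rule chernoff[OF p0 s0 Cpos])
           (rule cond_prec[OF si _ _ supp], insert s0, auto simp: vprec_def)
      then show ?thesis using ps R by simp
    qed
    have B: "multinomial_prob k n p (\<lambda>x. vsucc k x z) \<le> (\<Prod>i=0..k. (\<mu> i / real (z i)) ^ z i)"
      if V: "vsucc k (\<lambda>i. real (z i)) \<mu>"
    proof -
      have le: "\<forall>i\<in>{1..k}. \<mu> i \<le> real (z i)" using V by (simp add: vsucc_def)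
      have "(\<Sum>i=1..k. \<mu> i) \<le> (\<Sum>i=1..k. real (z i))" using le by (intro sum_mono) auto
      then have "real (z 0) \<le> \<mu> 0" using musum zsum by linarith
      then have s01: "s 0 \<le> 1" using m0 by (simp add: s_def)
      have si: "\<forall>i\<in>{1..k}. s 0 \<le> s i"
      proof
        fix i assume i: "i \<in> {1..k}"
        have "s i \<ge> 1" using le i mupos[of i] by (simp add: s_def)
        then show "s 0 \<le> s i" using s01 by auto
      qed
      have "multinomial_prob k n p (\<lambda>x. vsucc k x z) \<le> (\<Sum>i=0..k. p i * s i) ^ n / (\<Prod>i=0..k. s i ^ z i)"
        by (rule chernoff[OF p0 s0 Cpos])
           (rule cond_succ[OF si _ _ supp], insert s0, auto simp: vsucc_def)
      then show ?thesis using ps R by simp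
    qed
    show ?thesis using A B by blast
  qed
qed

end
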